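(* Let $G=(V,E)$ be a finite connected graph with arc set $A$. (a) Let $w_1:A\to\mathbb{C}$ with $\sum_{e:\,o(e)=u}|w_1(e)|^2=1$ for all $u\in V$, and let $(U_1\psi)(e)=\sum_{f:\,t(f)=o(e)}\big(2w_1(e)\overline{w_1(\bar f)}-\delta_{e,\bar f}\big)\psi(f)$ on functions $\psi:A\to\mathbb{C}$. Let $T$ be the operator on functions on $V$ given by $(Tf)(u)=\sum_{e:\,o(e)=u}w_1(e)\overline{w_1(\bar e)}f(t(e))$, and $\varphi_1(x)=(x+x^{-1})/2$. For $s\in\{1,-1\}$ put $n_s=|E|-|V|+\mathbf{1}_{\{s\in\sigma(T)\}}$. Then $\sigma(U_1)=\varphi_1^{-1}(\sigma(T))\cup\{1:n_1>0\}\cup\{-1:n_{-1}>0\}$ (i.e., $1$ is added iff $n_1>0$ and $-1$ is added iff $n_{-1}>0$). (b) Let $w_2:A\to(0,\infty)$ with $\sum_{e:\,o(e)=u}w_2(e)=1$ for all $u\in V$, and suppose there is $m_V:V\to(0,\infty)$ with $m_V(o(e))w_2(e)=m_V(t(e))w_2(\bar e)$ for all $e\in A$. Let $(U_2\psi)(e)=\sum_{f:\,t(f)=o(e)}\big(2w_2(\bar f)-\delta_{e,\bar f}\big)\psi(f)$, let $(Lf)(u)=\sum_{e:\,o(e)=u}w_2(e)f(t(e))-f(u)$, and $\varphi_2(x)=(x+x^{-1})/2-1$. Then $\sigma(U_2)=\varphi_2^{-1}(\sigma(L))$ if $G$ is a tree; $\sigma(U_2)=\varphi_2^{-1}(\sigma(L))\cup\{1\}$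 if $G$ has exactly one cycle and is not bipartite; and $\sigma(U_2)=\varphi_2^{-1}(\sigma(L))\cup\{1,-1\}$ otherwise.
   Context: $A=\{(u,v):\{u,v\}\in E\}$; for $e=(u,v)$, $o(e)=u$, $t(e)=v$, $\bar e=(v,u)$. $\delta$ is the Kronecker delta, $\mathbf{1}$ an indicator, $\sigma(\cdot)$ the spectrum (set of eigenvalues), and for a function $\varphi$ and set $X$, $\varphi^{-1}(X)=\{x\in\mathbb{C}\setminus\{0\}:\varphi(x)\in X\}$. "Exactly one cycle" means $|E|=|V|$ for the connected graph $G$. *)

theory Defs
  imports "HOL-Analysis.Analysis"
begin

definition simple_graph :: "'a set \<Rightarrow> 'a set set \<Rightarrow> bool" where
  "simple_graph V E \<longleftrightarrow> finite V \<and> (\<forall>e\<in>E. e \<subseteq> V \<and> card e = 2)"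

definition adj :: "'a set set \<Rightarrow> 'a \<Rightarrow> 'a \<Rightarrow> bool" where
  "adj E u v \<longleftrightarrow> {u, v} \<in> E"

definition connected_graph :: "'a set \<Rightarrow> 'a set set \<Rightarrow> bool" where
  "connected_graph V E \<longleftrightarrow> V \<noteq> {} \<and> (\<forall>u\<in>V. \<forall>v\<in>V. (adj E)\<^sup>*\<^sup>* u v)"

definition arcs :: "'a set set \<Rightarrow> ('a \<times> 'a) set" where
  "arcs E = {(u, v). {u, v} \<in> E}"

definition rev_arc :: "'a \<times> 'a \<Rightarrow> 'a \<times> 'a" where
  "rev_arc e = (snd e, fst e)"

definition has_cycle :: "'a set set \<Rightarrow> bool" where
  "has_cycle E \<longleftrightarrow> (\<exists>vs. length vs \<ge> 3 \<and> distinct vs \<and>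
      (\<forall>i < length vs - 1. adj E (vs ! i) (vs ! Suc i)) \<and> adj E (last vs) (hd vs))"

definition is_tree :: "'a set \<Rightarrow> 'a set set \<Rightarrow> bool" where
  "is_tree V E \<longleftrightarrow> connected_graph V E \<and> \<not> has_cycle E"

definition bipartite :: "'a set \<Rightarrow> 'a set set \<Rightarrow> bool" where
  "bipartite V E \<longleftrightarrow> (\<exists>c :: 'a \<Rightarrow> bool. \<forall>u v. {u, v} \<in> E \<longrightarrow> c u \<noteq> c v)"

definition op_spectrum :: "'b set \<Rightarrow> (('b \<Rightarrow> complex) \<Rightarrow> 'b \<Rightarrow> complex) \<Rightarrow> complex set" where
  "op_spectrum S M = {c. \<exists>\<psi>. (\<forall>x. x \<notin> S \<longrightarrow> \<psi> x = 0) \<and> (\<exists>x\<in>S. \<psi> x \<noteq> 0) \<and>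
                               (\<forall>x\<in>S. M \<psi> x = c * \<psi> x)}"

definition preim :: "(complex \<Rightarrow> complex) \<Rightarrow> complex set \<Rightarrow> complex set" where
  "preim \<phi> X = {x. x \<noteq> 0 \<and> \<phi> x \<in> X}"

definition phi1 :: "complex \<Rightarrow> complex" where
  "phi1 x = (x + inverse x) / 2"

definition phi2 :: "complex \<Rightarrow> complex" where
  "phi2 x = (x + inverse x) / 2 - 1"

definition U1 :: "'a set set \<Rightarrow> ('a \<times> 'a \<Rightarrow> complex) \<Rightarrow> ('a \<times> 'a \<Rightarrow> complex) \<Rightarrow> 'a \<times> 'a \<Rightarrow> complex" where
  "U1 E w \<psi> e = (\<Sum>f\<in>{f\<in>arcs E. snd f = fst e}.
      (2 * w e * cnj (w (rev_arc f)) - (if e = rev_arc f then 1 else 0)) * \<psi> f)"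

definition T_op :: "'a set set \<Rightarrow> ('a \<times> 'a \<Rightarrow> complex) \<Rightarrow> ('a \<Rightarrow> complex) \<Rightarrow> 'a \<Rightarrow> complex" where
  "T_op E w f u = (\<Sum>e\<in>{e\<in>arcs E. fst e = u}. w e * cnj (w (rev_arc e)) * f (snd e))"

definition U2 :: "'a set set \<Rightarrow> ('a \<times> 'a \<Rightarrow> real) \<Rightarrow> ('a \<times> 'a \<Rightarrow> complex) \<Rightarrow> 'a \<times> 'a \<Rightarrow> complex" where
  "U2 E w \<psi> e = (\<Sum>f\<in>{f\<in>arcs E. snd f = fst e}.
      (2 * complex_of_real (w (rev_arc f)) - (if e = rev_arc f then 1 else 0)) * \<psi> f)"

definition L_op :: "'a set set \<Rightarrow> ('a \<times> 'a \<Rightarrow> real) \<Rightarrow> ('a \<Rightarrow> complex) \<Rightarrow> 'a \<Rightarrow> complex" where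
  "L_op E w f u = (\<Sum>e\<in>{e\<in>arcs E. fst e = u}. complex_of_real (w e) * f (snd e)) - f u"

end

theory Submission
  imports Defs "Jordan_Normal_Form.Determinant"
begin


lemma ker_transpose:
  fixes M :: "nat \<Rightarrow> nat \<Rightarrow> complex"
  assumes ker: "\<forall>i<n. (\<Sum>j<n. M i j * x j) = 0" and nz: "\<exists>j<n. x j \<noteq> 0"
  shows "\<exists>y. (\<exists>i<n. y i \<noteq> 0) \<and> (\<forall>j<n. (\<Sum>i<n. y i * M i j) = 0)"
proof -
  define A where "A = mat n n (\<lambda>(i,j). M i j)"
  have A: "A \<in> carrier_mat n n" unfolding A_def by simp
  define v where "v = vec n x"
  have v: "v \<in> carrier_vec n" unfolding v_def by simp
  have "v \<noteq> 0\<^sub>v n" using nz unfolding v_def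
    by (metis index_vec index_zero_vec(1))
  moreover have "A *\<^sub>v v = 0\<^sub>v n"
  proof (rule eq_vecI)
    fix i assume "i < dim_vec (0\<^sub>v n)"
    hence i: "i < n" by simp
    have "(A *\<^sub>v v) $ i = (\<Sum>j\<in>{0..<n}. M i j * x j)"
      using i unfolding A_def v_def by (simp add: scalar_prod_def)
    also have "\<dots> = 0" using ker i by (simp add: atLeast0LessThan)
    finally show "(A *\<^sub>v v) $ i = 0\<^sub>v n $ i" using i by simp
  qed (simp add: A_def)
  ultimately have "det A = 0" using det_0_iff_vec_prod_zero[OF A] v by blast
  hence "det (transpose_mat A) = 0" using det_transpose[OF A] by simp
  moreover have At: "transpose_mat A \<in> carrier_mat n n" using A by simp
  ultimately obtain u where u: "u \<in> carrier_vec n" "u \<noteq> 0\<^sub>v n" "transpose_mat A *\<^sub>v u = 0\<^sub>v n"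
    using det_0_iff_vec_prod_zero[OF At] by blast
  show ?thesis
  proof (rule exI[of _ "\<lambda>i. u $ i"], intro conjI)
    show "\<exists>i<n. u $ i \<noteq> 0"
    proof (rule ccontr)
      assume "\<not> (\<exists>i<n. u $ i \<noteq> 0)"
      hence "u = 0\<^sub>v n" using u(1) by (intro eq_vecI) auto
      thus False using u(2) by simp
    qed
    show "\<forall>j<n. (\<Sum>i<n. u $ i * M i j) = 0"
    proof (intro allI impI)
      fix j assume j: "j < n"
      have "(transpose_mat A *\<^sub>v u) $ j = (\<Sum>i\<in>{0..<n}. M i j * u $ i)"
        using j u(1) unfolding A_def by (simp add: scalar_prod_def)
      thus "(\<Sum>i<n. u $ i * M i j) = 0" using u(3) j
        by (simp add: atLeast0LessThan mult.commute)
    qed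
  qed
qed

lemma ker_transpose_set:
  fixes c :: "'y \<Rightarrow> 'x \<Rightarrow> complex"
  assumes X: "finite X" and Y: "finite Y" and card: "card X = card Y"
    and ker: "\<forall>j\<in>Y. (\<Sum>i\<in>X. c j i * x i) = 0" and nz: "\<exists>i\<in>X. x i \<noteq> 0"
  shows "\<exists>h. (\<exists>j\<in>Y. h j \<noteq> 0) \<and> (\<forall>i\<in>X. (\<Sum>j\<in>Y. h j * c j i) = 0)"
proof -
  define n where "n = card X"
  obtain f where f: "bij_betw f {0..<n} X" using ex_bij_betw_nat_finite[OF X] n_def by blast
  obtain g where g: "bij_betw g {0..<n} Y" using ex_bij_betw_nat_finite[OF Y] n_def card by auto
  define M where "M k l = c (g k) (f l)" for k l
  have "\<forall>k<n. (\<Sum>l<n. M k l * x (f l)) = 0"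
  proof (intro allI impI)
    fix k assume k: "k < n"
    have "(\<Sum>l<n. M k l * x (f l)) = (\<Sum>i\<in>X. c (g k) i * x i)"
      unfolding M_def lessThan_atLeast0 using sum.reindex_bij_betw[OF f, of "\<lambda>i. c (g k) i * x i"] by simp
    also have "\<dots> = 0" using ker k g by (simp add: bij_betw_apply)
    finally show "(\<Sum>l<n. M k l * x (f l)) = 0" .
  qed
  moreover have "\<exists>l<n. x (f l) \<noteq> 0"
  proof -
    obtain i where "i \<in> X" "x i \<noteq> 0" using nz by blast
    then obtain l where "l \<in> {0..<n}" "f l = i" using f by (metis bij_betw_iff_bijections)
    thus ?thesis using \<open>x i \<noteq> 0\<close> by auto
  qed
  ultimately obtain y where y: "\<exists>k<n. y k \<noteq> 0" "\<forall>l<n. (\<Sum>k<n. y k * M k l) = 0"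
    using ker_transpose[of n M "\<lambda>l. x (f l)"] by blast
  define h where "h j = y (inv_into {0..<n} g j)" for j
  have hg: "h (g k) = y k" if "k < n" for k
    unfolding h_def using g that by (simp add: bij_betw_inv_into_left)
  show ?thesis
  proof (rule exI[of _ h], intro conjI ballI)
    obtain k where "k < n" "y k \<noteq> 0" using y by blast
    thus "\<exists>j\<in>Y. h j \<noteq> 0" using hg g by (metis atLeastLessThan_iff bij_betw_apply zero_le)
  next
    fix i assume "i \<in> X"
    then obtain l where l: "l < n" "f l = i" using f by (metis atLeastLessThan_iff bij_betw_iff_bijections)
    have "(\<Sum>j\<in>Y. h j * c j i) = (\<Sum>k\<in>{0..<n}. h (g k) * c (g k) i)"
      using sum.reindex_bij_betw[OF g, of "\<lambda>j. h j * c j i"] by simp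
    also have "\<dots> = (\<Sum>k<n. y k * M k l)"
      unfolding lessThan_atLeast0 M_def using hg l by (intro sum.cong) auto
    also have "\<dots> = 0" using y l by simp
    finally show "(\<Sum>j\<in>Y. h j * c j i) = 0" .
  qed
qed

lemma more_unknowns:
  fixes c :: "'y \<Rightarrow> 'x \<Rightarrow> complex"
  assumes X: "finite X" and Y: "finite Y" and card: "card Y < card X"
  shows "\<exists>x. (\<exists>i\<in>X. x i \<noteq> 0) \<and> (\<forall>j\<in>Y. (\<Sum>i\<in>X. c j i * x i) = 0)"
proof -
  define n where "n = card X"
  define m where "m = card Y"
  obtain f where f: "bij_betw f {0..<n} X" using ex_bij_betw_nat_finite[OF X] n_def by blast
  obtain g where g: "bij_betw g {0..<m} Y" using ex_bij_betw_nat_finite[OF Y] m_def by auto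
  have mn: "m < n" using card m_def n_def by simp
  define M where "M k l = (if k < m then c (g k) (f l) else 0)" for k l
  define e where "e j = (if j = n - 1 then 1 else (0::complex))" for j
  have "\<forall>i<n. (\<Sum>j<n. M j i * e j) = 0"
  proof (intro allI impI)
    fix i assume "i < n"
    have "(\<Sum>j<n. M j i * e j) = M (n-1) i" unfolding e_def using mn
      by (simp add: if_distrib cong: if_cong)
    also have "\<dots> = 0" unfolding M_def using mn by simp
    finally show "(\<Sum>j<n. M j i * e j) = 0" .
  qed
  moreover have "\<exists>j<n. e j \<noteq> 0" unfolding e_def using mn by (intro exI[of _ "n-1"]) auto
  ultimately obtain y where y: "\<exists>k<n. y k \<noteq> 0" "\<forall>l<n. (\<Sum>k<n. y k * M l k) = 0"
    using ker_transpose[of n "\<lambda>i j. M j i" e] by blast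
  define x where "x i = y (inv_into {0..<n} f i)" for i
  have xf: "x (f k) = y k" if "k < n" for k
    unfolding x_def using f that by (simp add: bij_betw_inv_into_left)
  show ?thesis
  proof (rule exI[of _ x], intro conjI ballI)
    obtain k where "k < n" "y k \<noteq> 0" using y by blast
    thus "\<exists>i\<in>X. x i \<noteq> 0" using xf f by (metis atLeastLessThan_iff bij_betw_apply zero_le)
  next
    fix j assume "j \<in> Y"
    then obtain l where l: "l < m" "g l = j" using g by (metis atLeastLessThan_iff bij_betw_iff_bijections)
    have "(\<Sum>i\<in>X. c j i * x i) = (\<Sum>k\<in>{0..<n}. c j (f k) * x (f k))"
      using sum.reindex_bij_betw[OF f, of "\<lambda>i. c j i * x i"] by simp
    also have "\<dots> = (\<Sum>k<n. y k * M l k)"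
      unfolding lessThan_atLeast0 M_def using xf l by (intro sum.cong) (auto simp: mult.commute)
    also have "\<dots> = 0" using y l mn by simp
    finally show "(\<Sum>i\<in>X. c j i * x i) = 0" .
  qed
qed

lemma transpose_sol:
  fixes c :: "'y \<Rightarrow> 'x \<Rightarrow> complex"
  assumes X: "finite X" and Y: "finite Y" and card: "card X \<le> card Y"
    and ker: "\<forall>j\<in>Y. (\<Sum>i\<in>X. c j i * x i) = 0" and nz: "\<exists>i\<in>X. x i \<noteq> 0"
  shows "\<exists>h. (\<exists>j\<in>Y. h j \<noteq> 0) \<and> (\<forall>i\<in>X. (\<Sum>j\<in>Y. h j * c j i) = 0)"
proof (cases "card X = card Y")
  case True thus ?thesis using ker_transpose_set[OF X Y True ker nz] by blast
next
  case False
  hence "card X < card Y" using card by simp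
  from more_unknowns[OF Y X this, of "\<lambda>i j. c j i"] show ?thesis
    by (auto simp: mult.commute)
qed

lemma rev_rev[simp]: "rev_arc (rev_arc e) = e" by (simp add: rev_arc_def)
lemma fst_rev[simp]: "fst (rev_arc e) = snd e" by (simp add: rev_arc_def)
lemma snd_rev[simp]: "snd (rev_arc e) = fst e" by (simp add: rev_arc_def)

definition Ug :: "('a\<times>'a) set \<Rightarrow> ('a\<times>'a \<Rightarrow> complex) \<Rightarrow> ('a\<times>'a \<Rightarrow> complex) \<Rightarrow> ('a\<times>'a \<Rightarrow> complex) \<Rightarrow> 'a\<times>'a \<Rightarrow> complex" where
  "Ug A a b \<psi> e = (\<Sum>f\<in>{f\<in>A. snd f = fst e}. (2 * a e * b (rev_arc f) - (if e = rev_arc f then 1 else 0)) * \<psi> f)"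

definition Mg :: "('a\<times>'a) set \<Rightarrow> ('a\<times>'a \<Rightarrow> complex) \<Rightarrow> ('a\<times>'a \<Rightarrow> complex) \<Rightarrow> ('a \<Rightarrow> complex) \<Rightarrow> 'a \<Rightarrow> complex" where
  "Mg A a b f u = (\<Sum>g\<in>{g\<in>A. fst g = u}. b g * a (rev_arc g) * f (snd g))"

definition Gs :: "('a\<times>'a) set \<Rightarrow> ('a\<times>'a \<Rightarrow> complex) \<Rightarrow> ('a\<times>'a \<Rightarrow> complex) \<Rightarrow> 'a \<Rightarrow> complex" where
  "Gs A b \<psi> u = (\<Sum>f\<in>{f\<in>A. snd f = u}. b (rev_arc f) * \<psi> f)"

definition Fk :: "('a\<times>'a) set \<Rightarrow> ('a\<times>'a \<Rightarrow> complex) \<Rightarrow> ('a\<times>'a \<Rightarrow> complex) \<Rightarrow> 'a \<Rightarrow> complex" where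
  "Fk A b \<psi> u = (\<Sum>g\<in>{g\<in>A. fst g = u}. b g * \<psi> g)"

lemma Ug_lin: "Ug A a b (\<lambda>e. x * \<alpha> e + y * \<beta> e) e = x * Ug A a b \<alpha> e + y * Ug A a b \<beta> e"
  unfolding Ug_def sum_distrib_left sum.distrib[symmetric] by (intro sum.cong refl) (simp add: algebra_simps)

locale arcsys =
  fixes A :: "('a\<times>'a) set" and V :: "'a set" and a b :: "'a\<times>'a \<Rightarrow> complex"
  assumes finA: "finite A" and revA: "e \<in> A \<Longrightarrow> rev_arc e \<in> A" and fstV: "e \<in> A \<Longrightarrow> fst e \<in> V"
    and norm: "u \<in> V \<Longrightarrow> (\<Sum>g\<in>{g\<in>A. fst g = u}. b g * a g) = 1"
begin

lemma sndV: "e \<in> A \<Longrightarrow> snd e \<in> V"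
  using fstV[OF revA] by simp

lemma reidx: "(\<Sum>f\<in>{f\<in>A. snd f = u}. h f) = (\<Sum>g\<in>{g\<in>A. fst g = u}. h (rev_arc g))"
proof -
  have img: "{f\<in>A. snd f = u} = rev_arc ` {g\<in>A. fst g = u}"
  proof
    show "{f \<in> A. snd f = u} \<subseteq> rev_arc ` {g \<in> A. fst g = u}"
    proof
      fix f assume "f \<in> {f \<in> A. snd f = u}"
      hence "rev_arc f \<in> {g \<in> A. fst g = u}" using revA by auto
      thus "f \<in> rev_arc ` {g \<in> A. fst g = u}" by (metis image_eqI rev_rev)
    qed
  qed (auto simp: revA)
  have "inj_on rev_arc {g\<in>A. fst g = u}" by (metis inj_onI rev_rev)
  thus ?thesis unfolding img by (simp add: sum.reindex)
qed

lemma UF: assumes "e \<in> A" shows "Ug A a b \<psi> e = 2 * a e * Gs A b \<psi> (fst e) - \<psi> (rev_arc e)"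
proof -
  let ?S = "{f\<in>A. snd f = fst e}"
  have fin: "finite ?S" using finA by simp
  have "Ug A a b \<psi> e = (\<Sum>f\<in>?S. 2 * a e * (b (rev_arc f) * \<psi> f)) - (\<Sum>f\<in>?S. if f = rev_arc e then \<psi> f else 0)"
    unfolding Ug_def sum_subtractf[symmetric]
    by (intro sum.cong refl) (auto simp: algebra_simps)
  also have "(\<Sum>f\<in>?S. if f = rev_arc e then \<psi> f else 0) = \<psi> (rev_arc e)"
    using sum.delta'[OF fin, of "rev_arc e" \<psi>] revA[OF assms]
    by (simp add: eq_commute)
  finally show ?thesis unfolding Gs_def by (simp add: sum_distrib_left)
qed

end



context arcsys begin

lemma Fk_U: assumes "u \<in> V" shows "Fk A b (Ug A a b \<psi>) u = Gs A b \<psi> u"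
proof -
  have "Fk A b (Ug A a b \<psi>) u = (\<Sum>g\<in>{g\<in>A. fst g = u}. 2 * Gs A b \<psi> u * (b g * a g) - b g * \<psi> (rev_arc g))"
    unfolding Fk_def by (intro sum.cong refl) (auto simp: UF algebra_simps)
  also have "\<dots> = 2 * Gs A b \<psi> u * 1 - Gs A b \<psi> u"
    unfolding sum_subtractf sum_distrib_left[symmetric] norm[OF assms]
    by (simp add: Gs_def reidx)
  finally show ?thesis by simp
qed

lemma Gs_U: assumes "u \<in> V" shows "Gs A b (Ug A a b \<psi>) u = 2 * Mg A a b (Gs A b \<psi>) u - Fk A b \<psi> u"
proof -
  have "Gs A b (Ug A a b \<psi>) u = (\<Sum>g\<in>{g\<in>A. fst g = u}. b g * Ug A a b \<psi> (rev_arc g))"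
    unfolding Gs_def reidx by simp
  also have "\<dots> = (\<Sum>g\<in>{g\<in>A. fst g = u}. 2 * (b g * a (rev_arc g) * Gs A b \<psi> (snd g)) - b g * \<psi> g)"
    by (intro sum.cong refl) (auto simp: UF revA algebra_simps)
  finally show ?thesis unfolding sum_subtractf sum_distrib_left[symmetric] Mg_def Fk_def .
qed

lemma Fk_cong: "(\<forall>e\<in>A. \<psi> e = \<phi> e) \<Longrightarrow> Fk A b \<psi> u = Fk A b \<phi> u"
  unfolding Fk_def by (intro sum.cong) auto
lemma Gs_cong: "(\<forall>e\<in>A. \<psi> e = \<phi> e) \<Longrightarrow> Gs A b \<psi> u = Gs A b \<phi> u"
  unfolding Gs_def by (intro sum.cong) auto

lemma eig_U:
  assumes eig: "\<forall>e\<in>A. Ug A a b \<psi> e = l * \<psi> e" and nz: "\<exists>e\<in>A. \<psi> e \<noteq> 0"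
  shows "(l \<noteq> 0 \<and> phi1 l \<in> op_spectrum V (Mg A a b)) \<or>
         (l * l = 1 \<and> (\<forall>e\<in>A. \<psi> (rev_arc e) = - l * \<psi> e) \<and> (\<forall>u\<in>V. Fk A b \<psi> u = 0))"
proof -
  have FU: "Fk A b (Ug A a b \<psi>) u = l * Fk A b \<psi> u" for u
  proof -
    have "Fk A b (Ug A a b \<psi>) u = Fk A b (\<lambda>e. l * \<psi> e) u" using eig by (intro Fk_cong) auto
    thus ?thesis by (simp add: Fk_def sum_distrib_left algebra_simps)
  qed
  have GU: "Gs A b (Ug A a b \<psi>) u = l * Gs A b \<psi> u" for u
  proof -
    have "Gs A b (Ug A a b \<psi>) u = Gs A b (\<lambda>e. l * \<psi> e) u" using eig by (intro Gs_cong) auto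
    thus ?thesis by (simp add: Gs_def sum_distrib_left algebra_simps)
  qed
  have GF: "Gs A b \<psi> u = l * Fk A b \<psi> u" if "u \<in> V" for u
    using Fk_U[OF that, of \<psi>] FU[of u] by simp
  have G2: "l * Gs A b \<psi> u = 2 * Mg A a b (Gs A b \<psi>) u - Fk A b \<psi> u" if "u \<in> V" for u
    using Gs_U[OF that, of \<psi>] GU[of u] by simp
  show ?thesis
  proof (cases "\<forall>u\<in>V. Fk A b \<psi> u = 0")
    case True
    have rel: "l * \<psi> e = - \<psi> (rev_arc e)" if "e \<in> A" for e
    proof -
      have "Gs A b \<psi> (fst e) = 0" using GF True fstV[OF that] by simp
      thus ?thesis using UF[OF that, of \<psi>] eig that by simp
    qed
    obtain e0 where e0: "e0 \<in> A" "\<psi> e0 \<noteq> 0" using nz by blast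
    have "l * (l * \<psi> e0) = \<psi> e0" using rel[OF e0(1)] rel[OF revA[OF e0(1)]] by simp
    hence "l * l = 1" using e0(2) by (metis mult.assoc mult_cancel_right2)
    moreover have "\<forall>e\<in>A. \<psi> (rev_arc e) = - l * \<psi> e" using rel by simp
    ultimately show ?thesis using True by blast
  next
    case False
    then obtain u0 where u0: "u0 \<in> V" "Fk A b \<psi> u0 \<noteq> 0" by blast
    have l0: "l \<noteq> 0"
    proof
      assume l: "l = 0"
      have "\<psi> e = 0" if "e \<in> A" for e
      proof -
        have "Gs A b \<psi> (snd e) = 0" using GF l sndV[OF that] by simp
        hence "Ug A a b \<psi> (rev_arc e) = - \<psi> e" using UF[OF revA[OF that], of \<psi>] by simp
        thus ?thesis using eig revA[OF that] l by simp
      qed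
      thus False using nz by blast
    qed
    define F0 where "F0 u = (if u \<in> V then Fk A b \<psi> u else 0)" for u
    have MG: "Mg A a b (Gs A b \<psi>) u = l * Mg A a b F0 u" for u
      unfolding Mg_def sum_distrib_left
      by (intro sum.cong refl) (auto simp: F0_def GF sndV)
    have "phi1 l \<in> op_spectrum V (Mg A a b)"
      unfolding op_spectrum_def
    proof (intro CollectI exI[of _ F0] conjI ballI allI impI)
      show "x \<notin> V \<Longrightarrow> F0 x = 0" for x by (simp add: F0_def)
      show "\<exists>x\<in>V. F0 x \<noteq> 0" using u0 by (auto simp: F0_def)
      fix u assume u: "u \<in> V"
      have "l * (l * Fk A b \<psi> u) = 2 * (l * Mg A a b F0 u) - Fk A b \<psi> u"
        using G2[OF u] GF[OF u] MG by simp
      hence "Mg A a b F0 u = (l * l + 1) / (2 * l) * Fk A b \<psi> u"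
        using l0 by (simp add: field_simps)
      thus "Mg A a b F0 u = phi1 l * F0 u"
        using u l0 by (simp add: F0_def phi1_def field_simps)
    qed
    thus ?thesis using l0 by blast
  qed
qed

lemma birth_to_U:
  assumes rv: "\<forall>e\<in>A. \<psi> (rev_arc e) = - l * \<psi> e" and K: "\<forall>u\<in>V. Fk A b \<psi> u = 0"
    and nz: "\<exists>e\<in>A. \<psi> e \<noteq> 0" and out: "\<forall>e. e \<notin> A \<longrightarrow> \<psi> e = 0"
  shows "l \<in> op_spectrum A (Ug A a b)"
  unfolding op_spectrum_def
proof (intro CollectI exI[of _ \<psi>] conjI ballI allI impI)
  show "x \<notin> A \<Longrightarrow> \<psi> x = 0" for x using out by blast
  show "\<exists>x\<in>A. \<psi> x \<noteq> 0" using nz .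
  fix e assume e: "e \<in> A"
  have "Gs A b \<psi> (fst e) = (\<Sum>g\<in>{g\<in>A. fst g = fst e}. b g * \<psi> (rev_arc g))"
    unfolding Gs_def reidx by simp
  also have "\<dots> = - l * Fk A b \<psi> (fst e)"
    unfolding Fk_def sum_distrib_left using rv by (intro sum.cong refl) auto
  also have "\<dots> = 0" using K fstV[OF e] by simp
  finally show "Ug A a b \<psi> e = l * \<psi> e" using UF[OF e, of \<psi>] rv e by simp
qed

lemma eig_M_to_U:
  assumes l0: "l \<noteq> 0" and mu: "phi1 l \<in> op_spectrum V (Mg A a b)"
  shows "l \<in> op_spectrum A (Ug A a b)"
proof -
  define \<mu> where "\<mu> = phi1 l"
  obtain f where f0: "\<forall>x. x \<notin> V \<longrightarrow> f x = 0" and fnz: "\<exists>x\<in>V. f x \<noteq> 0"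
    and fM: "\<forall>x\<in>V. Mg A a b f x = \<mu> * f x"
    using mu unfolding op_spectrum_def \<mu>_def by blast
  obtain u0 where u0: "u0 \<in> V" "f u0 \<noteq> 0" using fnz by blast
  define \<alpha> where "\<alpha> e = (if e \<in> A then a e * f (fst e) else 0)" for e
  define \<beta> where "\<beta> e = (if e \<in> A then a (rev_arc e) * f (snd e) else 0)" for e
  have Ga: "Gs A b \<alpha> u = \<mu> * f u" if "u \<in> V" for u
  proof -
    have "Gs A b \<alpha> u = (\<Sum>g\<in>{g\<in>A. fst g = u}. b g * \<alpha> (rev_arc g))" unfolding Gs_def reidx by simp
    also have "\<dots> = Mg A a b f u" unfolding Mg_def \<alpha>_def by (intro sum.cong refl) (auto simp: revA)
    finally show ?thesis using fM that by simp
  qed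
  have Gb: "Gs A b \<beta> u = f u" if "u \<in> V" for u
  proof -
    have "Gs A b \<beta> u = (\<Sum>g\<in>{g\<in>A. fst g = u}. b g * \<beta> (rev_arc g))" unfolding Gs_def reidx by simp
    also have "\<dots> = (\<Sum>g\<in>{g\<in>A. fst g = u}. b g * a g) * f u"
      unfolding \<beta>_def sum_distrib_right by (intro sum.cong refl) (auto simp: revA)
    finally show ?thesis using norm[OF that] by simp
  qed
  have Ua: "Ug A a b \<alpha> e = 2 * \<mu> * \<alpha> e - \<beta> e" if "e \<in> A" for e
    using UF[OF that, of \<alpha>] Ga[OF fstV[OF that]] that revA[OF that] by (simp add: \<alpha>_def \<beta>_def)
  have Ub: "Ug A a b \<beta> e = \<alpha> e" if "e \<in> A" for e
    using UF[OF that, of \<beta>] Gb[OF fstV[OF that]] that revA[OF that] by (simp add: \<alpha>_def \<beta>_def)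
  have Fa: "Fk A b \<alpha> u = f u" if "u \<in> V" for u
  proof -
    have "Fk A b \<alpha> u = (\<Sum>g\<in>{g\<in>A. fst g = u}. b g * a g) * f u"
      unfolding Fk_def \<alpha>_def sum_distrib_right by (intro sum.cong refl) (auto simp: revA)
    thus ?thesis using norm[OF that] by simp
  qed
  have Fb: "Fk A b \<beta> u = \<mu> * f u" if "u \<in> V" for u
  proof -
    have "Fk A b \<beta> u = Mg A a b f u"
      unfolding Fk_def \<beta>_def Mg_def by (intro sum.cong refl) (auto simp: mult.assoc)
    thus ?thesis using fM that by simp
  qed
  define c where "c = 1 / l"
  have lc: "l * c = 1" using l0 by (simp add: c_def)
  have mu2: "2 * \<mu> = l + c" unfolding \<mu>_def phi1_def c_def by (simp add: field_simps)
  define \<psi> where "\<psi> e = 1 * \<alpha> e + (- c) * \<beta> e" for e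
  show ?thesis
  proof (cases "\<exists>e\<in>A. \<psi> e \<noteq> 0")
    case True
    show ?thesis unfolding op_spectrum_def
    proof (intro CollectI exI[of _ \<psi>] conjI ballI allI impI)
      show "x \<notin> A \<Longrightarrow> \<psi> x = 0" for x by (simp add: \<psi>_def \<alpha>_def \<beta>_def)
      show "\<exists>x\<in>A. \<psi> x \<noteq> 0" using True .
      fix e assume e: "e \<in> A"
      have "Ug A a b \<psi> e = 1 * Ug A a b \<alpha> e + (- c) * Ug A a b \<beta> e"
        unfolding \<psi>_def by (rule Ug_lin)
      also have "\<dots> = (2 * \<mu> - c) * \<alpha> e - \<beta> e" using Ua[OF e] Ub[OF e] by (simp add: algebra_simps)
      also have "\<dots> = l * \<alpha> e - l * c * \<beta> e" using mu2 lc by simp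
      also have "\<dots> = l * \<psi> e" by (simp add: \<psi>_def algebra_simps)
      finally show "Ug A a b \<psi> e = l * \<psi> e" .
    qed
  next
    case False
    have "Fk A b \<psi> u0 = 0" unfolding Fk_def using False by (intro sum.neutral) auto
    moreover have "Fk A b \<psi> u0 = Fk A b \<alpha> u0 - c * Fk A b \<beta> u0"
      unfolding Fk_def sum_distrib_left sum_subtractf[symmetric]
      by (intro sum.cong refl) (simp add: \<psi>_def algebra_simps)
    hence "Fk A b \<psi> u0 = f u0 - c * (\<mu> * f u0)"
      using Fa[OF u0(1)] Fb[OF u0(1)] by simp
    ultimately have "c * \<mu> = 1" using u0(2)
      by (metis mult.assoc mult_cancel_right1 right_minus_eq)
    hence mul: "\<mu> = l" using lc l0 by (metis mult.commute mult_cancel_left mult.left_neutral mult.assoc)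
    hence cl: "c = l" using mu2 by simp
    have ba: "\<beta> e = l * \<alpha> e" if "e \<in> A" for e
    proof -
      have "\<alpha> e = c * \<beta> e" using False that by (simp add: \<psi>_def)
      thus ?thesis using lc by (simp add: algebra_simps)
    qed
    show ?thesis unfolding op_spectrum_def
    proof (intro CollectI exI[of _ \<alpha>] conjI ballI allI impI)
      show "x \<notin> A \<Longrightarrow> \<alpha> x = 0" for x by (simp add: \<alpha>_def)
      show "\<exists>x\<in>A. \<alpha> x \<noteq> 0"
      proof (rule ccontr)
        assume "\<not> (\<exists>x\<in>A. \<alpha> x \<noteq> 0)"
        hence "Fk A b \<alpha> u0 = 0" unfolding Fk_def by (intro sum.neutral) auto
        thus False using Fa[OF u0(1)] u0(2) by simp
      qed
      fix e assume e: "e \<in> A"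
      show "Ug A a b \<alpha> e = l * \<alpha> e" using Ua[OF e] ba[OF e] mul by (simp add: algebra_simps)
    qed
  qed
qed

end

definition edg :: "'a\<times>'a \<Rightarrow> 'a set" where "edg e = {fst e, snd e}"
definition orient :: "'a set set \<Rightarrow> 'a set \<Rightarrow> 'a\<times>'a" where
  "orient E \<epsilon> = (SOME p. p \<in> arcs E \<and> edg p = \<epsilon>)"
definition coef :: "'a set set \<Rightarrow> ('a\<times>'a \<Rightarrow> complex) \<Rightarrow> complex \<Rightarrow> 'a \<Rightarrow> 'a set \<Rightarrow> complex" where
  "coef E b l u \<epsilon> = (if u = fst (orient E \<epsilon>) then b (orient E \<epsilon>)
      else if u = snd (orient E \<epsilon>) then - l * b (rev_arc (orient E \<epsilon>)) else 0)"

lemma edg_rev[simp]: "edg (rev_arc e) = edg e" by (auto simp: edg_def)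

locale sgraph =
  fixes V :: "'a set" and E :: "'a set set"
  assumes sg: "simple_graph V E"
begin

lemma finV: "finite V" using sg by (simp add: simple_graph_def)
lemma finE: "finite E"
proof -
  have "E \<subseteq> Pow V" using sg by (auto simp: simple_graph_def)
  thus ?thesis using finV by (meson finite_Pow_iff rev_finite_subset)
qed

lemma arc_in: "e \<in> arcs E \<Longrightarrow> fst e \<in> V \<and> snd e \<in> V"
  using sg by (auto simp: simple_graph_def arcs_def)
lemma finA: "finite (arcs E)"
proof -
  have "arcs E \<subseteq> V \<times> V" using arc_in by auto
  thus ?thesis using finV by (meson finite_SigmaI rev_finite_subset)
qed
lemma revA: "e \<in> arcs E \<Longrightarrow> rev_arc e \<in> arcs E"
  by (auto simp: arcs_def rev_arc_def insert_commute)
lemma loopfree: "e \<in> arcs E \<Longrightarrow> fst e \<noteq> snd e"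
  using sg by (auto simp: simple_graph_def arcs_def)
lemma edgE: "e \<in> arcs E \<Longrightarrow> edg e \<in> E"
  by (auto simp: arcs_def edg_def)

lemma orient: assumes "\<epsilon> \<in> E" shows "orient E \<epsilon> \<in> arcs E \<and> edg (orient E \<epsilon>) = \<epsilon>"
proof -
  have "card \<epsilon> = 2" using sg assms by (auto simp: simple_graph_def)
  then obtain x y where "\<epsilon> = {x, y}" by (meson card_2_iff)
  hence "(x, y) \<in> arcs E \<and> edg (x, y) = \<epsilon>" using assms by (simp add: arcs_def edg_def)
  thus ?thesis unfolding orient_def by (rule someI)
qed

lemma orient_edg: assumes e: "e \<in> arcs E"
  shows "orient E (edg e) = e \<or> orient E (edg e) = rev_arc e"
proof -
  have "edg (orient E (edg e)) = edg e" using orient[OF edgE[OF e]] by simp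
  thus ?thesis by (cases e; cases "orient E (edg e)") (auto simp: edg_def rev_arc_def doubleton_eq_iff)
qed

lemma Fk_coef:
  assumes psi: "\<forall>e\<in>arcs E. \<psi> e = (if e = orient E (edg e) then x (edg e) else - l * x (edg e))"
  shows "Fk (arcs E) b \<psi> u = (\<Sum>\<epsilon>\<in>E. coef E b l u \<epsilon> * x \<epsilon>)"
proof -
  let ?S = "{g\<in>arcs E. fst g = u}"
  have sub: "edg ` ?S \<subseteq> E" using edgE by auto
  have zero: "coef E b l u \<epsilon> * x \<epsilon> = 0" if "\<epsilon> \<in> E - edg ` ?S" for \<epsilon>
  proof -
    let ?p = "orient E \<epsilon>"
    have p: "?p \<in> arcs E" "edg ?p = \<epsilon>" using orient that by auto
    have "u \<noteq> fst ?p"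
    proof
      assume "u = fst ?p" hence "?p \<in> ?S" using p by auto
      thus False using that p by blast
    qed
    moreover have "u \<noteq> snd ?p"
    proof
      assume "u = snd ?p" hence "rev_arc ?p \<in> ?S" using p revA by auto
      thus False using that p by (metis DiffD2 edg_rev image_eqI)
    qed
    ultimately show ?thesis by (simp add: coef_def)
  qed
  have "(\<Sum>\<epsilon>\<in>E. coef E b l u \<epsilon> * x \<epsilon>) = (\<Sum>\<epsilon>\<in>edg ` ?S. coef E b l u \<epsilon> * x \<epsilon>)"
    by (rule sum.mono_neutral_right[OF finE sub]) (use zero in auto)
  also have "inj_on edg ?S"
  proof (rule inj_onI)
    fix g g' assume g: "g \<in> ?S" and g': "g' \<in> ?S" and eq: "edg g = edg g'"
    have "snd g \<noteq> u" using g loopfree[of g] by auto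
    have "snd g' \<noteq> u" using g' loopfree[of g'] by auto
    hence "snd g = snd g'" using eq g g' by (auto simp: edg_def doubleton_eq_iff)
    thus "g = g'" using g g' by (simp add: prod_eq_iff)
  qed
  hence "(\<Sum>\<epsilon>\<in>edg ` ?S. coef E b l u \<epsilon> * x \<epsilon>) = (\<Sum>g\<in>?S. coef E b l u (edg g) * x (edg g))"
    by (simp add: sum.reindex)
  also have "\<dots> = (\<Sum>g\<in>?S. b g * \<psi> g)"
  proof (intro sum.cong refl)
    fix g assume g: "g \<in> ?S"
    hence gA: "g \<in> arcs E" and gu: "fst g = u" by auto
    show "coef E b l u (edg g) * x (edg g) = b g * \<psi> g"
    proof (cases "orient E (edg g) = g")
      case True thus ?thesis using psi gA gu by (simp add: coef_def)
    next
      case False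
      hence o: "orient E (edg g) = rev_arc g" using orient_edg[OF gA] by simp
      have "u \<noteq> snd g" using loopfree[OF gA] gu by simp
      thus ?thesis using psi gA gu False o by (simp add: coef_def)
    qed
  qed
  finally show ?thesis unfolding Fk_def by simp
qed

lemma trans_rel:
  assumes H: "\<forall>\<epsilon>\<in>E. (\<Sum>u\<in>V. h u * coef E b l u \<epsilon>) = 0" and l: "l * l = 1"
  shows "\<forall>e\<in>arcs E. h (fst e) * b e = l * h (snd e) * b (rev_arc e)"
proof -
  have ori: "h (fst p) * b p = l * h (snd p) * b (rev_arc p)" if "\<epsilon> \<in> E" "p = orient E \<epsilon>" for \<epsilon> p
  proof -
    have p: "p \<in> arcs E" using orient that by auto
    have ne: "fst p \<noteq> snd p" using loopfree[OF p] .
    have V: "fst p \<in> V" "snd p \<in> V" using arc_in[OF p] by auto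
    have "(\<Sum>u\<in>V. h u * coef E b l u \<epsilon>) =
          (\<Sum>u\<in>V. (if u = fst p then h (fst p) * b p else 0) + (if u = snd p then - l * h (snd p) * b (rev_arc p) else 0))"
      using ne by (intro sum.cong refl) (auto simp: coef_def that(2))
    also have "\<dots> = h (fst p) * b p - l * h (snd p) * b (rev_arc p)"
      unfolding sum.distrib using V finV by (simp add: sum.delta')
    finally show ?thesis using H that(1) by simp
  qed
  show ?thesis
  proof
    fix e assume e: "e \<in> arcs E"
    show "h (fst e) * b e = l * h (snd e) * b (rev_arc e)"
    proof (cases "orient E (edg e) = e")
      case True thus ?thesis using ori[OF edgE[OF e]] by metis
    next
      case False
      hence "orient E (edg e) = rev_arc e" using orient_edg[OF e] by simp
      hence "h (snd e) * b (rev_arc e) = l * h (fst e) * b e" using ori[OF edgE[OF e], of "rev_arc e"] by simp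
      hence "l * (h (snd e) * b (rev_arc e)) = l * l * h (fst e) * b e" by (simp add: algebra_simps)
      thus ?thesis using l by (simp add: algebra_simps)
    qed
  qed
qed

end




context sgraph begin

lemma birth_exists:
  assumes card: "card V < card E" and l: "l * l = 1"
  shows "\<exists>\<psi>. (\<forall>e\<in>arcs E. \<psi> (rev_arc e) = - l * \<psi> e) \<and> (\<forall>u\<in>V. Fk (arcs E) b \<psi> u = 0)
            \<and> (\<exists>e\<in>arcs E. \<psi> e \<noteq> 0) \<and> (\<forall>e. e \<notin> arcs E \<longrightarrow> \<psi> e = 0)"
proof -
  obtain x where x: "\<exists>\<epsilon>\<in>E. x \<epsilon> \<noteq> 0" "\<forall>u\<in>V. (\<Sum>\<epsilon>\<in>E. coef E b l u \<epsilon> * x \<epsilon>) = 0"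
    using more_unknowns[OF finE finV card, of "\<lambda>u \<epsilon>. coef E b l u \<epsilon>"] by blast
  define \<psi> where "\<psi> e = (if e \<in> arcs E then (if e = orient E (edg e) then x (edg e) else - l * x (edg e)) else 0)" for e
  show ?thesis
  proof (intro exI[of _ \<psi>] conjI ballI allI impI)
    fix e assume e: "e \<in> arcs E"
    have ne: "rev_arc e \<noteq> e" using loopfree[OF e] by (auto simp: rev_arc_def prod_eq_iff)
    show "\<psi> (rev_arc e) = - l * \<psi> e"
    proof (cases "orient E (edg e) = e")
      case True thus ?thesis using e ne revA[OF e] by (simp add: \<psi>_def)
    next
      case False
      hence "orient E (edg e) = rev_arc e" using orient_edg[OF e] by simp
      thus ?thesis using e False revA[OF e] l by (simp add: \<psi>_def algebra_simps)
    qed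
  next
    fix u assume "u \<in> V"
    have "Fk (arcs E) b \<psi> u = (\<Sum>\<epsilon>\<in>E. coef E b l u \<epsilon> * x \<epsilon>)"
      by (rule Fk_coef) (simp add: \<psi>_def)
    thus "Fk (arcs E) b \<psi> u = 0" using x(2) \<open>u \<in> V\<close> by simp
  next
    obtain \<epsilon> where \<epsilon>: "\<epsilon> \<in> E" "x \<epsilon> \<noteq> 0" using x(1) by blast
    have "orient E \<epsilon> \<in> arcs E" "edg (orient E \<epsilon>) = \<epsilon>" using orient[OF \<epsilon>(1)] by auto
    thus "\<exists>e\<in>arcs E. \<psi> e \<noteq> 0" using \<epsilon>(2) by (intro bexI[of _ "orient E \<epsilon>"]) (auto simp: \<psi>_def)
  next
    show "e \<notin> arcs E \<Longrightarrow> \<psi> e = 0" for e by (simp add: \<psi>_def)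
  qed
qed

lemma birth_small:
  assumes card: "card E \<le> card V" and l: "l * l = 1"
    and rv: "\<forall>e\<in>arcs E. \<psi> (rev_arc e) = - l * \<psi> e" and K: "\<forall>u\<in>V. Fk (arcs E) b \<psi> u = 0"
    and nz: "\<exists>e\<in>arcs E. \<psi> e \<noteq> 0"
  shows "\<exists>h. (\<exists>u\<in>V. h u \<noteq> 0) \<and> (\<forall>e\<in>arcs E. h (fst e) * b e = l * h (snd e) * b (rev_arc e))"
proof -
  define x where "x \<epsilon> = \<psi> (orient E \<epsilon>)" for \<epsilon>
  have form: "\<forall>e\<in>arcs E. \<psi> e = (if e = orient E (edg e) then x (edg e) else - l * x (edg e))"
  proof
    fix e assume e: "e \<in> arcs E"
    show "\<psi> e = (if e = orient E (edg e) then x (edg e) else - l * x (edg e))"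
    proof (cases "orient E (edg e) = e")
      case True thus ?thesis by (simp add: x_def)
    next
      case False
      hence "orient E (edg e) = rev_arc e" using orient_edg[OF e] by simp
      thus ?thesis using False rv e l by (simp add: x_def algebra_simps)
    qed
  qed
  have ker: "\<forall>u\<in>V. (\<Sum>\<epsilon>\<in>E. coef E b l u \<epsilon> * x \<epsilon>) = 0"
    using Fk_coef[OF form, of b] K by simp
  have xnz: "\<exists>\<epsilon>\<in>E. x \<epsilon> \<noteq> 0"
  proof -
    obtain e where e: "e \<in> arcs E" "\<psi> e \<noteq> 0" using nz by blast
    have "x (edg e) \<noteq> 0"
    proof (cases "orient E (edg e) = e")
      case True thus ?thesis using e by (simp add: x_def)
    next
      case False
      hence "orient E (edg e) = rev_arc e" using orient_edg[OF e(1)] by simp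
      moreover have "l \<noteq> 0" using l by auto
      ultimately show ?thesis using e rv by (simp add: x_def)
    qed
    thus ?thesis using edgE[OF e(1)] by blast
  qed
  obtain h where h: "\<exists>u\<in>V. h u \<noteq> 0" "\<forall>\<epsilon>\<in>E. (\<Sum>u\<in>V. h u * coef E b l u \<epsilon>) = 0"
    using transpose_sol[OF finE finV card ker xnz] by blast
  show ?thesis using h(1) trans_rel[OF h(2) l] by blast
qed

lemma small_rel:
  fixes b :: "'a\<times>'a \<Rightarrow> complex"
  assumes card: "card E < card V" and l: "l * l = 1"
  shows "\<exists>h. (\<exists>u\<in>V. h u \<noteq> 0) \<and> (\<forall>e\<in>arcs E. h (fst e) * b e = l * h (snd e) * b (rev_arc e))"
proof -
  obtain h where h: "\<exists>u\<in>V. h u \<noteq> 0" "\<forall>\<epsilon>\<in>E. (\<Sum>u\<in>V. coef E b l u \<epsilon> * h u) = 0"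
    using more_unknowns[OF finV finE card, of "\<lambda>\<epsilon> u. coef E b l u \<epsilon>"] by blast
  have "\<forall>\<epsilon>\<in>E. (\<Sum>u\<in>V. h u * coef E b l u \<epsilon>) = 0" using h(2) by (simp add: mult.commute)
  thus ?thesis using h(1) trans_rel[OF _ l] by blast
qed

lemma BIP:
  assumes conn: "connected_graph V E" and nz: "\<exists>u\<in>V. k u \<noteq> (0::complex)"
    and rel: "\<forall>e\<in>arcs E. k (fst e) = - k (snd e)"
  shows "bipartite V E"
proof -
  obtain r where r: "r \<in> V" "k r \<noteq> 0" using nz by blast
  have reach: "k u = k r \<or> k u = - k r" if "(adj E)\<^sup>*\<^sup>* r u" for u
    using that
  proof (induction rule: rtranclp_induct)
    case base thus ?case by simp
  next
    case (step y z)
    hence "(y, z) \<in> arcs E" by (simp add: adj_def arcs_def)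
    hence "k z = - k y" using rel by force
    thus ?case using step.IH by auto
  qed
  show ?thesis unfolding bipartite_def
  proof (intro exI[of _ "\<lambda>u. k u = k r"] allI impI)
    fix u v assume uv: "{u, v} \<in> E"
    hence V: "u \<in> V" "v \<in> V" using sg by (auto simp: simple_graph_def)
    have "(u, v) \<in> arcs E" using uv by (simp add: arcs_def)
    hence kuv: "k u = - k v" using rel by force
    have ru: "k u = k r \<or> k u = - k r" using reach conn V(1) r(1) by (auto simp: connected_graph_def)
    have rv: "k v = k r \<or> k v = - k r" using reach conn V(2) r(1) by (auto simp: connected_graph_def)
    show "(k u = k r) \<noteq> (k v = k r)"
      using ru rv kuv r(2) by auto
  qed
qed

end

lemma convex_eq:
  fixes z :: "'i \<Rightarrow> complex"
  assumes fin: "finite I" and pos: "\<forall>i\<in>I. w i > (0::real)" and sw: "(\<Sum>i\<in>I. w i) = 1"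
    and bd: "\<forall>i\<in>I. cmod (z i) \<le> cmod z0" and avg: "(\<Sum>i\<in>I. of_real (w i) * z i) = z0"
  shows "\<forall>i\<in>I. z i = z0"
proof -
  define s where "s i = Re (cnj z0 * z i)" for i
  have sle: "s i \<le> (cmod z0)\<^sup>2" if "i \<in> I" for i
  proof -
    have "s i \<le> cmod (cnj z0 * z i)" unfolding s_def by (rule complex_Re_le_cmod)
    also have "\<dots> = cmod z0 * cmod (z i)" by (simp add: norm_mult)
    also have "\<dots> \<le> cmod z0 * cmod z0" using bd that by (simp add: mult_left_mono)
    finally show ?thesis by (simp add: power2_eq_square)
  qed
  have "(\<Sum>i\<in>I. w i * s i) = Re (cnj z0 * (\<Sum>i\<in>I. of_real (w i) * z i))"
    unfolding s_def sum_distrib_left Re_sum by (intro sum.cong refl) (simp add: algebra_simps)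
  also have "\<dots> = (cmod z0)\<^sup>2"
  proof -
    have "cnj z0 * z0 = of_real ((cmod z0)\<^sup>2)" using complex_norm_square[of z0] by (simp add: mult.commute)
    thus ?thesis using avg by simp
  qed
  finally have ssum: "(\<Sum>i\<in>I. w i * s i) = (cmod z0)\<^sup>2" .
  have "(\<Sum>i\<in>I. w i * ((cmod z0)\<^sup>2 - s i)) = 0"
    using ssum sw by (simp add: algebra_simps sum_subtractf sum_distrib_right[symmetric])
  hence "\<forall>i\<in>I. w i * ((cmod z0)\<^sup>2 - s i) = 0"
    using sum_nonneg_eq_0_iff[OF fin] pos sle by (smt (verit) mult_nonneg_nonneg)
  hence seq: "\<forall>i\<in>I. s i = (cmod z0)\<^sup>2"
  proof (intro ballI)
    fix i assume h: "\<forall>i\<in>I. w i * ((cmod z0)\<^sup>2 - s i) = 0" and i: "i \<in> I"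
    have "w i \<noteq> 0" using pos i by auto
    moreover have "w i * ((cmod z0)\<^sup>2 - s i) = 0" using h i by blast
    ultimately show "s i = (cmod z0)\<^sup>2" by simp
  qed
  show ?thesis
  proof
    fix i assume i: "i \<in> I"
    have id: "(cmod (z i - z0))\<^sup>2 = (cmod (z i))\<^sup>2 - 2 * s i + (cmod z0)\<^sup>2"
      unfolding s_def cmod_power2 by (simp add: power2_diff)
    have "(cmod (z i))\<^sup>2 \<le> (cmod z0)\<^sup>2" using bd i by (intro power_mono) auto
    hence "(cmod (z i - z0))\<^sup>2 \<le> 0" using id seq i by simp
    thus "z i = z0" by simp
  qed
qed

context sgraph begin

lemma neg1_bip:
  fixes f :: "'a \<Rightarrow> complex"
  assumes conn: "connected_graph V E" and wpos: "\<forall>e\<in>arcs E. w e > (0::real)"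
    and wsum: "\<forall>u\<in>V. (\<Sum>e\<in>{e\<in>arcs E. fst e = u}. w e) = 1"
    and fnz: "\<exists>u\<in>V. f u \<noteq> 0"
    and eig: "\<forall>u\<in>V. (\<Sum>e\<in>{e\<in>arcs E. fst e = u}. of_real (w e) * f (snd e)) = - f u"
  shows "bipartite V E"
proof -
  define M where "M = Max ((\<lambda>v. cmod (f v)) ` V)"
  have Vne: "V \<noteq> {}" using fnz by blast
  have Mge: "cmod (f v) \<le> M" if "v \<in> V" for v unfolding M_def using finV that by simp
  have "M \<in> (\<lambda>v. cmod (f v)) ` V" unfolding M_def using finV Vne by (intro Max_in) auto
  then obtain u0 where u0: "u0 \<in> V" "cmod (f u0) = M" by auto
  have Mpos: "M > 0"
  proof -
    obtain u where "u \<in> V" "f u \<noteq> 0" using fnz by blast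
    hence "0 < cmod (f u)" by simp
    thus ?thesis using Mge[OF \<open>u \<in> V\<close>] by linarith
  qed
  have nb: "\<forall>e\<in>{e\<in>arcs E. fst e = v}. f (snd e) = - f v" if "v \<in> V" "cmod (f v) = M" for v
  proof (rule convex_eq[where w = w and z = "\<lambda>e. f (snd e)"])
    show "finite {e\<in>arcs E. fst e = v}" using finA by simp
    show "\<forall>i\<in>{e \<in> arcs E. fst e = v}. 0 < w i" using wpos by auto
    show "(\<Sum>i\<in>{e\<in>arcs E. fst e = v}. w i) = 1" using wsum that by auto
    show "\<forall>i\<in>{e \<in> arcs E. fst e = v}. cmod (f (snd i)) \<le> cmod (- f v)"
    proof
      fix i assume "i \<in> {e \<in> arcs E. fst e = v}"
      hence "snd i \<in> V" using arc_in by blast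
      thus "cmod (f (snd i)) \<le> cmod (- f v)" using Mge that(2) by simp
    qed
    show "(\<Sum>i\<in>{e\<in>arcs E. fst e = v}. of_real (w i) * f (snd i)) = - f v" using eig that by auto
  qed
  have reach: "v \<in> V \<and> cmod (f v) = M" if "(adj E)\<^sup>*\<^sup>* u0 v" for v
    using that
  proof (induction rule: rtranclp_induct)
    case base thus ?case using u0 by simp
  next
    case (step y z)
    hence yz: "(y, z) \<in> arcs E" by (simp add: adj_def arcs_def)
    hence "(y, z) \<in> {e\<in>arcs E. fst e = y}" by simp
    hence "f z = - f y" using nb[of y] step.IH by fastforce
    thus ?case using step.IH arc_in[OF yz] by simp
  qed
  have all: "cmod (f v) = M" if "v \<in> V" for v
  proof -
    have "(adj E)\<^sup>*\<^sup>* u0 v" using conn u0(1) that unfolding connected_graph_def by blast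
    thus ?thesis using reach by blast
  qed
  show ?thesis
  proof (rule BIP[OF conn, of f])
    show "\<exists>u\<in>V. f u \<noteq> 0" using fnz .
    show "\<forall>e\<in>arcs E. f (fst e) = - f (snd e)"
    proof
      fix e assume e: "e \<in> arcs E"
      have fe: "fst e \<in> V" using arc_in[OF e] by blast
      have "e \<in> {e'\<in>arcs E. fst e' = fst e}" using e by simp
      hence "f (snd e) = - f (fst e)" using nb[OF fe all[OF fe]] by blast
      thus "f (fst e) = - f (snd e)" by simp
    qed
  qed
qed

end




definition cw :: "'a set set \<Rightarrow> 'a list \<Rightarrow> bool" where
  "cw E ws \<longleftrightarrow> ws \<noteq> [] \<and> successively (adj E) ws \<and> adj E (last ws) (hd ws)"

lemma adj_sym: "adj E u v = adj E v u" by (simp add: adj_def insert_commute)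

lemma succ_mid: "successively P (a @ b @ c) \<Longrightarrow> successively P b"
  by (simp add: successively_append_iff)

lemma succ_rev: "successively (adj E) xs \<Longrightarrow> successively (adj E) (rev xs)"
  by (induction xs) (auto simp: successively_append_iff successively_Cons last_rev adj_sym simp del: successively_rev)

context sgraph begin

lemma no_loop: "\<not> adj E u u"
  using sg by (auto simp: adj_def simple_graph_def)

lemma odd_cw_cycle: "cw E ws \<Longrightarrow> odd (length ws) \<Longrightarrow> has_cycle E"
proof (induction "length ws" arbitrary: ws rule: less_induct)
  case less
  show ?case
  proof (cases "distinct ws")
    case True
    have ne: "ws \<noteq> []" using less.prems by (simp add: cw_def)
    have "length ws \<noteq> 1"
    proof
      assume "length ws = 1"
      then obtain y where "ws = [y]" by (cases ws) auto
      thus False using less.prems no_loop by (simp add: cw_def)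
    qed
    hence "length ws \<ge> 3" using less.prems(2) ne
    proof -
      have "length ws \<noteq> 0" "length ws \<noteq> 2" using ne less.prems(2) by auto
      thus ?thesis using \<open>length ws \<noteq> 1\<close> by linarith
    qed
    moreover have "\<forall>i < length ws - 1. adj E (ws ! i) (ws ! Suc i)"
      using less.prems(1) unfolding cw_def by (auto intro: successively_nth)
    ultimately show ?thesis unfolding has_cycle_def using True less.prems(1) unfolding cw_def by blast
  next
    case False
    then obtain xs ys zs y where ws: "ws = xs @ [y] @ ys @ [y] @ zs"
      using not_distinct_decomp by blast
    have s: "successively (adj E) ws" and cl: "adj E (last ws) (hd ws)"
      using less.prems by (auto simp: cw_def)
    have s1: "successively (adj E) (y # ys @ [y])" using s ws succ_mid[of "adj E" xs "y # ys @ [y]" zs] by simp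
    have s2: "successively (adj E) (y # zs)" using s ws succ_mid[of "adj E" "xs @ [y] @ ys" "y # zs" "[]"] by simp
    have s3: "successively (adj E) (xs @ [y])" using s ws succ_mid[of "adj E" "[]" "xs @ [y]" "ys @ [y] @ zs"] by simp
    define W1 where "W1 = y # ys"
    define W2 where "W2 = y # zs @ xs"
    have c1: "cw E W1"
    proof -
      have h: "successively (adj E) ((y # ys) @ [y])" using s1 by simp
      hence "successively (adj E) (y # ys)" "adj E (last (y # ys)) y"
        unfolding successively_append_iff by auto
      thus ?thesis unfolding cw_def W1_def by simp
    qed
    have c2: "cw E W2"
    proof (cases "xs = []")
      case True
      hence "last ws = last (y # zs)" "hd ws = y" using ws by auto
      thus ?thesis unfolding cw_def W2_def using s2 True cl by simp
    next
      case False
      have lw: "last ws = last (y # zs)" "hd ws = hd xs" using ws False by auto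
      have sx: "successively (adj E) xs" using s3 by (simp add: successively_append_iff)
      have "adj E (last xs) y" using s3 False by (simp add: successively_append_iff)
      moreover have "successively (adj E) ((y # zs) @ xs)"
        unfolding successively_append_iff using s2 sx cl lw False by simp
      ultimately show ?thesis unfolding cw_def W2_def using False by simp
    qed
    have len: "length W1 + length W2 = length ws" unfolding W1_def W2_def ws by simp
    have "odd (length W1) \<or> odd (length W2)" using len less.prems(2) by presburger
    moreover have "length W1 < length ws" "length W2 < length ws"
      using len by (auto simp: W1_def W2_def)
    ultimately show ?thesis using less.hyps c1 c2 by blast
  qed
qed

lemma walk_ex: "(adj E)\<^sup>*\<^sup>* r u \<Longrightarrow> \<exists>p. p \<noteq> [] \<and> hd p = r \<and> last p = u \<and> successively (adj E) p"
proof (induction rule: rtranclp_induct)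
  case base thus ?case by (intro exI[of _ "[r]"]) auto
next
  case (step y z)
  then obtain p where p: "p \<noteq> []" "hd p = r" "last p = y" "successively (adj E) p" by blast
  show ?case using p step.hyps(2)
    by (intro exI[of _ "p @ [z]"]) (auto simp: successively_append_iff)
qed

lemma closing:
  assumes p: "p \<noteq> []" "hd p = r" "last p = u" "successively (adj E) p"
    and q: "q \<noteq> []" "hd q = r" "last q = v" "successively (adj E) q"
    and uv: "adj E u v" and par: "odd (length p + length q - 1)"
  shows "has_cycle E"
proof (cases "tl p = []")
  case True
  hence "p = [r]" using p by (cases p) auto
  hence "u = r" using p by simp
  have "cw E (rev q)" unfolding cw_def using q uv \<open>u = r\<close> succ_rev[OF q(4)]
    by (simp add: hd_rev last_rev adj_sym[of E r v] del: successively_rev)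
  moreover have "odd (length (rev q))" using par \<open>p = [r]\<close> by simp
  ultimately show ?thesis by (rule odd_cw_cycle)
next
  case False
  then obtain p' where pp: "p = r # p'" "p' \<noteq> []" using p by (cases p) auto
  have "cw E (p' @ rev q)"
    unfolding cw_def using p q uv pp succ_rev[OF q(4)]
    by (auto simp: successively_append_iff hd_rev last_rev successively_Cons simp del: successively_rev)
  moreover have "odd (length (p' @ rev q))" using par pp by simp
  ultimately show ?thesis by (rule odd_cw_cycle)
qed

lemma tree_bip:
  assumes conn: "connected_graph V E" and nc: "\<not> has_cycle E"
  shows "bipartite V E"
proof -
  obtain r where r: "r \<in> V" using conn by (auto simp: connected_graph_def)
  define c where "c u = (\<exists>p. p \<noteq> [] \<and> hd p = r \<and> last p = u \<and> successively (adj E) p \<and> odd (length p))" for u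
  have wk: "\<exists>p. p \<noteq> [] \<and> hd p = r \<and> last p = u \<and> successively (adj E) p" if "u \<in> V" for u
  proof -
    have "(adj E)\<^sup>*\<^sup>* r u" using conn r that unfolding connected_graph_def by blast
    thus ?thesis by (rule walk_ex)
  qed
  show ?thesis unfolding bipartite_def
  proof (intro exI[of _ c] allI impI)
    fix u v assume uv: "{u, v} \<in> E"
    hence V: "u \<in> V" "v \<in> V" using sg by (auto simp: simple_graph_def)
    have a: "adj E u v" using uv by (simp add: adj_def)
    show "c u \<noteq> c v"
    proof
      assume eq: "c u = c v"
      obtain p q where p: "p \<noteq> []" "hd p = r" "last p = u" "successively (adj E) p"
        and q: "q \<noteq> []" "hd q = r" "last q = v" "successively (adj E) q"
        and par: "odd (length p) = odd (length q)"
      proof (cases "c u")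
        case True
        then obtain p where "p \<noteq> []" "hd p = r" "last p = u" "successively (adj E) p" "odd (length p)"
          unfolding c_def by blast
        moreover obtain q where "q \<noteq> []" "hd q = r" "last q = v" "successively (adj E) q" "odd (length q)"
          using True eq unfolding c_def by blast
        ultimately show ?thesis using that by blast
      next
        case False
        obtain p where p: "p \<noteq> []" "hd p = r" "last p = u" "successively (adj E) p" using wk V by blast
        obtain q where q: "q \<noteq> []" "hd q = r" "last q = v" "successively (adj E) q" using wk V by blast
        have "\<not> odd (length p)" using False p unfolding c_def by blast
        moreover have "\<not> odd (length q)" using False eq q unfolding c_def by blast
        ultimately show ?thesis using that p q by blast
      qed
      have "odd (length p + length q - 1)" using par p(1) q(1) by (cases p; cases q) auto
      thus False using closing[OF p q a] nc by blast
    qed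
  qed
qed

end





lemma sg_arcsys:
  assumes "sgraph V E" and "\<And>u. u \<in> V \<Longrightarrow> (\<Sum>g\<in>{g\<in>arcs E. fst g = u}. b g * a g) = 1"
  shows "arcsys (arcs E) V a b"
  using assms sgraph.finA sgraph.revA sgraph.arc_in by unfold_locales blast+

lemma cnj_mult_self: "cnj z * z = complex_of_real ((cmod z)\<^sup>2)"
  using complex_norm_square[of z] by (simp add: mult.commute)

lemma phi1_pm: "phi1 1 = 1" "phi1 (-1) = -1" by (simp_all add: phi1_def)

context sgraph begin

lemma T_real:
  fixes w :: "'a\<times>'a \<Rightarrow> complex"
  assumes mu: "\<mu> \<in> op_spectrum V (T_op E w)"
  shows "cnj \<mu> = \<mu>"
proof -
  obtain f where f0: "\<forall>x. x \<notin> V \<longrightarrow> f x = 0" and fnz: "\<exists>x\<in>V. f x \<noteq> 0"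
    and fT: "\<forall>x\<in>V. T_op E w f x = \<mu> * f x"
    using mu unfolding op_spectrum_def by blast
  define c where "c e = w e * cnj (w (rev_arc e))" for e
  define g where "g e = cnj (f (fst e)) * c e * f (snd e)" for e
  define Q where "Q = (\<Sum>e\<in>arcs E. g e)"
  define S where "S = (\<Sum>u\<in>V. cnj (f u) * f u)"
  have "Q = (\<Sum>u\<in>V. \<Sum>e\<in>{e\<in>arcs E. fst e = u}. g e)"
    unfolding Q_def using finA finV arc_in by (intro sum.group[symmetric]) auto
  also have "\<dots> = (\<Sum>u\<in>V. cnj (f u) * T_op E w f u)"
    unfolding T_op_def sum_distrib_left g_def c_def by (intro sum.cong refl) (auto simp: mult.assoc)
  also have "\<dots> = \<mu> * S" unfolding S_def sum_distrib_left using fT by (intro sum.cong refl) auto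
  finally have QS: "Q = \<mu> * S" .
  have "cnj Q = (\<Sum>e\<in>arcs E. f (fst e) * c (rev_arc e) * cnj (f (snd e)))"
    unfolding Q_def g_def c_def by (simp add: cnj_sum mult_ac)
  also have "\<dots> = (\<Sum>e\<in>arcs E. f (snd e) * c e * cnj (f (fst e)))"
  proof -
    have bij: "bij_betw rev_arc (arcs E) (arcs E)"
      by (rule bij_betw_byWitness[where f' = rev_arc]) (auto simp: revA)
    show ?thesis using sum.reindex_bij_betw[OF bij, of "\<lambda>e. f (snd e) * c e * cnj (f (fst e))"]
      by simp
  qed
  also have "\<dots> = Q" unfolding Q_def g_def by (intro sum.cong refl) (simp add: algebra_simps)
  finally have cQ: "cnj Q = Q" .
  have Sr: "S = of_real (\<Sum>u\<in>V. (cmod (f u))\<^sup>2)"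
    unfolding S_def of_real_sum cnj_mult_self by (rule refl)
  have Spos: "(\<Sum>u\<in>V. (cmod (f u))\<^sup>2) > 0"
  proof -
    obtain u where "u \<in> V" "f u \<noteq> 0" using fnz by blast
    hence "(cmod (f u))\<^sup>2 > 0" by simp
    moreover have "(cmod (f u))\<^sup>2 \<le> (\<Sum>u\<in>V. (cmod (f u))\<^sup>2)"
      using \<open>u \<in> V\<close> finV by (intro member_le_sum) auto
    ultimately show ?thesis by linarith
  qed
  have S0: "S \<noteq> 0" "cnj S = S" unfolding Sr using Spos by (simp_all del: of_real_sum of_real_power)
  have "cnj \<mu> * S = \<mu> * S" using QS cQ S0(2) by (metis complex_cnj_mult)
  thus ?thesis using S0(1) by simp
qed

lemma part_a:
  fixes w :: "'a\<times>'a \<Rightarrow> complex"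
  assumes conn: "connected_graph V E"
    and nw: "\<forall>u\<in>V. (\<Sum>e\<in>{e\<in>arcs E. fst e = u}. (cmod (w e))\<^sup>2) = 1"
  defines "n \<equiv> (\<lambda>s::complex. int (card E) - int (card V) + (if s \<in> op_spectrum V (T_op E w) then 1 else 0))"
  shows "op_spectrum (arcs E) (U1 E w) =
            preim phi1 (op_spectrum V (T_op E w))
            \<union> {x. x = 1 \<and> n 1 > 0} \<union> {x. x = -1 \<and> n (-1) > 0}"
proof -
  define b where "b e = cnj (w e)" for e
  have norm: "(\<Sum>g\<in>{g\<in>arcs E. fst g = u}. b g * w g) = 1" if "u \<in> V" for u
  proof -
    have "(\<Sum>g\<in>{g\<in>arcs E. fst g = u}. b g * w g) = of_real (\<Sum>e\<in>{e\<in>arcs E. fst e = u}. (cmod (w e))\<^sup>2)"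
      unfolding of_real_sum b_def cnj_mult_self by (rule refl)
    thus ?thesis using nw that by simp
  qed
  interpret arcsys "arcs E" V w b
    by (rule sg_arcsys) (use norm sgraph_axioms in auto)
  have U: "U1 E w = Ug (arcs E) w b" by (simp add: fun_eq_iff U1_def Ug_def b_def)
  have TM: "T_op E w (\<lambda>x. cnj (f x)) u = cnj (Mg (arcs E) w b f u)" for f u
    unfolding T_op_def Mg_def b_def by (simp add: cnj_sum mult.commute mult.left_commute)
  have MT: "Mg (arcs E) w b (\<lambda>x. cnj (f x)) u = cnj (T_op E w f u)" for f u
    unfolding T_op_def Mg_def b_def by (simp add: cnj_sum mult.commute mult.left_commute)
  have conj_sp: "cnj \<mu> \<in> op_spectrum V (T_op E w)" if mu: "\<mu> \<in> op_spectrum V (Mg (arcs E) w b)" for \<mu>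
  proof -
    obtain f where f0: "(\<forall>x. x \<notin> V \<longrightarrow> f x = 0) \<and> (\<exists>x\<in>V. f x \<noteq> 0) \<and> (\<forall>x\<in>V. Mg (arcs E) w b f x = \<mu> * f x)"
      using mu unfolding op_spectrum_def by blast
    note f = conjunct1[OF f0] conjunct1[OF conjunct2[OF f0]] conjunct2[OF conjunct2[OF f0]]
    show ?thesis unfolding op_spectrum_def
    proof (intro CollectI exI[of _ "\<lambda>x. cnj (f x)"] conjI ballI allI impI)
      show "x \<notin> V \<Longrightarrow> cnj (f x) = 0" for x using f(1) by simp
      show "\<exists>x\<in>V. cnj (f x) \<noteq> 0" using f(2) by simp
      fix x assume "x \<in> V"
      have "T_op E w (\<lambda>x. cnj (f x)) x = cnj (Mg (arcs E) w b f x)" by (rule TM)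
      also have "\<dots> = cnj (\<mu> * f x)" using f(3) \<open>x \<in> V\<close> by simp
      finally show "T_op E w (\<lambda>x. cnj (f x)) x = cnj \<mu> * cnj (f x)" by simp
    qed
  qed
  have conj_sp2: "cnj \<mu> \<in> op_spectrum V (Mg (arcs E) w b)" if mu: "\<mu> \<in> op_spectrum V (T_op E w)" for \<mu>
  proof -
    obtain f where f0: "(\<forall>x. x \<notin> V \<longrightarrow> f x = 0) \<and> (\<exists>x\<in>V. f x \<noteq> 0) \<and> (\<forall>x\<in>V. T_op E w f x = \<mu> * f x)"
      using mu unfolding op_spectrum_def by blast
    note f = conjunct1[OF f0] conjunct1[OF conjunct2[OF f0]] conjunct2[OF conjunct2[OF f0]]
    show ?thesis unfolding op_spectrum_def
    proof (intro CollectI exI[of _ "\<lambda>x. cnj (f x)"] conjI ballI allI impI)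
      show "x \<notin> V \<Longrightarrow> cnj (f x) = 0" for x using f(1) by simp
      show "\<exists>x\<in>V. cnj (f x) \<noteq> 0" using f(2) by simp
      fix x assume "x \<in> V"
      have "Mg (arcs E) w b (\<lambda>x. cnj (f x)) x = cnj (T_op E w f x)" by (rule MT)
      also have "\<dots> = cnj (\<mu> * f x)" using f(3) \<open>x \<in> V\<close> by simp
      finally show "Mg (arcs E) w b (\<lambda>x. cnj (f x)) x = cnj \<mu> * cnj (f x)" by simp
    qed
  qed
  have MTeq: "op_spectrum V (Mg (arcs E) w b) = op_spectrum V (T_op E w)"
  proof
    show "op_spectrum V (Mg (arcs E) w b) \<subseteq> op_spectrum V (T_op E w)"
    proof
      fix \<mu> assume "\<mu> \<in> op_spectrum V (Mg (arcs E) w b)"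
      hence "cnj \<mu> \<in> op_spectrum V (T_op E w)" by (rule conj_sp)
      moreover hence "cnj (cnj \<mu>) = cnj \<mu>" by (rule T_real)
      ultimately show "\<mu> \<in> op_spectrum V (T_op E w)" by simp
    qed
  next
    show "op_spectrum V (T_op E w) \<subseteq> op_spectrum V (Mg (arcs E) w b)"
    proof
      fix \<mu> assume h: "\<mu> \<in> op_spectrum V (T_op E w)"
      hence "cnj \<mu> = \<mu>" by (rule T_real)
      thus "\<mu> \<in> op_spectrum V (Mg (arcs E) w b)" using conj_sp2[OF h] by simp
    qed
  qed
  have smallT: "l \<in> op_spectrum V (T_op E w)"
    if l: "l * l = 1" and h: "\<exists>u\<in>V. h u \<noteq> 0" "\<forall>e\<in>arcs E. h (fst e) * b e = l * h (snd e) * b (rev_arc e)" for l h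
  proof -
    define h' where "h' u = (if u \<in> V then h u else 0)" for u
    show ?thesis unfolding op_spectrum_def
    proof (intro CollectI exI[of _ h'] conjI ballI allI impI)
      show "x \<notin> V \<Longrightarrow> h' x = 0" for x by (simp add: h'_def)
      show "\<exists>x\<in>V. h' x \<noteq> 0" using h(1) by (auto simp: h'_def)
      fix u assume u: "u \<in> V"
      have "T_op E w h' u = (\<Sum>e\<in>{e\<in>arcs E. fst e = u}. l * h u * (b e * w e))"
        unfolding T_op_def
      proof (intro sum.cong refl)
        fix e assume e: "e \<in> {e\<in>arcs E. fst e = u}"
        have "rev_arc e \<in> arcs E" using revA e by blast
        hence "h (fst (rev_arc e)) * b (rev_arc e) = l * h (snd (rev_arc e)) * b (rev_arc (rev_arc e))"
          using h(2) by blast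
        hence hr: "h (snd e) * cnj (w (rev_arc e)) = l * h u * cnj (w e)" using e by (simp add: b_def)
        have "h' (snd e) = h (snd e)" using e arc_in[of e] by (simp add: h'_def)
        hence "w e * cnj (w (rev_arc e)) * h' (snd e) = w e * (h (snd e) * cnj (w (rev_arc e)))" by simp
        also have "\<dots> = l * h u * (b e * w e)" unfolding hr by (simp add: b_def)
        finally show "w e * cnj (w (rev_arc e)) * h' (snd e) = l * h u * (b e * w e)" .
      qed
      also have "\<dots> = l * h' u" using norm[OF u] u by (simp add: sum_distrib_left[symmetric] h'_def)
      finally show "T_op E w h' u = l * h' u" .
    qed
  qed
  show ?thesis
  proof
    show "op_spectrum (arcs E) (U1 E w) \<subseteq> preim phi1 (op_spectrum V (T_op E w)) \<union> {x. x = 1 \<and> n 1 > 0} \<union> {x. x = -1 \<and> n (-1) > 0}"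
    proof
      fix l assume "l \<in> op_spectrum (arcs E) (U1 E w)"
      then obtain \<psi> where eig: "\<forall>e\<in>arcs E. Ug (arcs E) w b \<psi> e = l * \<psi> e" and nz: "\<exists>e\<in>arcs E. \<psi> e \<noteq> 0"
        unfolding op_spectrum_def U by blast
      from eig_U[OF eig nz] show "l \<in> preim phi1 (op_spectrum V (T_op E w)) \<union> {x. x = 1 \<and> n 1 > 0} \<union> {x. x = -1 \<and> n (-1) > 0}"
      proof
        assume "l \<noteq> 0 \<and> phi1 l \<in> op_spectrum V (Mg (arcs E) w b)"
        thus ?thesis using MTeq by (simp add: preim_def)
      next
        assume B: "l * l = 1 \<and> (\<forall>e\<in>arcs E. \<psi> (rev_arc e) = - l * \<psi> e) \<and> (\<forall>u\<in>V. Fk (arcs E) b \<psi> u = 0)"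
        have lpm: "l = 1 \<or> l = -1" using B by (metis mult_cancel_left1 square_eq_1_iff)
        show ?thesis
        proof (cases "l \<in> op_spectrum V (T_op E w)")
          case True
          hence "phi1 l \<in> op_spectrum V (T_op E w)" "l \<noteq> 0" using lpm phi1_pm by auto
          thus ?thesis by (simp add: preim_def)
        next
          case False
          have "\<not> card E \<le> card V"
          proof
            assume "card E \<le> card V"
            from birth_small[OF this, of l \<psi> b] B nz obtain h where
              "\<exists>u\<in>V. h u \<noteq> 0" "\<forall>e\<in>arcs E. h (fst e) * b e = l * h (snd e) * b (rev_arc e)" by blast
            thus False using smallT[of l h] B False by blast
          qed
          hence "n l > 0" using False unfolding n_def by simp
          thus ?thesis using lpm by auto
        qed
      qed
    qed
  next
    show "preim phi1 (op_spectrum V (T_op E w)) \<union> {x. x = 1 \<and> n 1 > 0} \<union> {x. x = -1 \<and> n (-1) > 0} \<subseteq> op_spectrum (arcs E) (U1 E w)"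
    proof
      fix l assume l: "l \<in> preim phi1 (op_spectrum V (T_op E w)) \<union> {x. x = 1 \<and> n 1 > 0} \<union> {x. x = -1 \<and> n (-1) > 0}"
      show "l \<in> op_spectrum (arcs E) (U1 E w)"
      proof (cases "l \<in> preim phi1 (op_spectrum V (T_op E w))")
        case True
        thus ?thesis unfolding U using eig_M_to_U MTeq by (simp add: preim_def)
      next
        case False
        hence lpm: "(l = 1 \<or> l = -1) \<and> n l > 0" using l by auto
        have "l \<notin> op_spectrum V (T_op E w)" using False lpm phi1_pm by (auto simp: preim_def)
        hence "card V < card E" using lpm unfolding n_def by simp
        moreover have "l * l = 1" using lpm by auto
        ultimately obtain \<psi> where "\<forall>e\<in>arcs E. \<psi> (rev_arc e) = - l * \<psi> e" "\<forall>u\<in>V. Fk (arcs E) b \<psi> u = 0"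
            "\<exists>e\<in>arcs E. \<psi> e \<noteq> 0" "\<forall>e. e \<notin> arcs E \<longrightarrow> \<psi> e = 0"
          using birth_exists by blast
        thus ?thesis unfolding U by (rule birth_to_U)
      qed
    qed
  qed
qed

lemma part_b:
  fixes w :: "'a\<times>'a \<Rightarrow> real"
  assumes conn: "connected_graph V E"
    and wpos: "\<forall>e\<in>arcs E. w e > 0"
    and wsum: "\<forall>u\<in>V. (\<Sum>e\<in>{e\<in>arcs E. fst e = u}. w e) = 1"
    and rv: "\<exists>mV :: 'a \<Rightarrow> real. (\<forall>u\<in>V. mV u > 0) \<and>
          (\<forall>e\<in>arcs E. mV (fst e) * w e = mV (snd e) * w (rev_arc e))"
  shows "op_spectrum (arcs E) (U2 E w) =
        (if is_tree V E then preim phi2 (op_spectrum V (L_op E w))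
         else if card E = card V \<and> \<not> bipartite V E
           then preim phi2 (op_spectrum V (L_op E w)) \<union> {1}
         else preim phi2 (op_spectrum V (L_op E w)) \<union> {1, -1})"
proof -
  define P where "P = preim phi2 (op_spectrum V (L_op E w))"
  define b where "b e = complex_of_real (w e)" for e
  define one where "one = (\<lambda>_::'a\<times>'a. 1::complex)"
  have norm: "(\<Sum>g\<in>{g\<in>arcs E. fst g = u}. b g * one g) = 1" if "u \<in> V" for u
  proof -
    have "(\<Sum>g\<in>{g\<in>arcs E. fst g = u}. b g * one g) = of_real (\<Sum>e\<in>{e\<in>arcs E. fst e = u}. w e)"
      unfolding of_real_sum b_def one_def by simp
    thus ?thesis using wsum that by simp
  qed
  interpret arcsys "arcs E" V one b
    by (rule sg_arcsys) (use norm sgraph_axioms in auto)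
  have U: "U2 E w = Ug (arcs E) one b" by (simp add: fun_eq_iff U2_def Ug_def b_def one_def)
  have MLeq: "Mg (arcs E) one b f u = L_op E w f u + f u" for f u
    by (simp add: Mg_def L_op_def b_def one_def)
  have pt: "(Mg (arcs E) one b f x = c * f x) = (L_op E w f x = (c - 1) * f x)" for f x c
    by (simp add: MLeq left_diff_distrib eq_diff_eq)
  have mem: "c \<in> op_spectrum V (Mg (arcs E) one b) \<longleftrightarrow> c - 1 \<in> op_spectrum V (L_op E w)" for c
    unfolding op_spectrum_def pt by simp
  have Pdef: "x \<in> P \<longleftrightarrow> x \<noteq> 0 \<and> phi1 x \<in> op_spectrum V (Mg (arcs E) one b)" for x
    unfolding P_def preim_def mem phi1_def phi2_def by simp
  have L2: "L_op E w f u = (\<Sum>e\<in>{e\<in>arcs E. fst e = u}. of_real (w e) * f (snd e)) - f u" for f u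
    by (simp add: L_op_def)
  have P1: "1 \<in> P"
  proof -
    define f where "f u = (if u \<in> V then 1 else (0::complex))" for u
    have "0 \<in> op_spectrum V (L_op E w)" unfolding op_spectrum_def
    proof (intro CollectI exI[of _ f] conjI ballI allI impI)
      show "x \<notin> V \<Longrightarrow> f x = 0" for x by (simp add: f_def)
      show "\<exists>x\<in>V. f x \<noteq> 0" using conn by (auto simp: f_def connected_graph_def)
      fix u assume u: "u \<in> V"
      have "(\<Sum>e\<in>{e\<in>arcs E. fst e = u}. of_real (w e) * f (snd e)) = of_real (\<Sum>e\<in>{e\<in>arcs E. fst e = u}. w e)"
        unfolding of_real_sum using arc_in by (intro sum.cong refl) (auto simp: f_def)
      thus "L_op E w f u = 0 * f u" using wsum u unfolding L2 by (simp add: f_def)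
    qed
    thus ?thesis unfolding P_def preim_def phi2_def by simp
  qed
  have Pbip: "-1 \<in> P" if bip: "bipartite V E"
  proof -
    obtain c :: "'a \<Rightarrow> bool" where c: "\<forall>u v. {u, v} \<in> E \<longrightarrow> c u \<noteq> c v" using bip unfolding bipartite_def by blast
    define f where "f u = (if u \<in> V then (if c u then 1 else -1) else (0::complex))" for u
    have "-2 \<in> op_spectrum V (L_op E w)" unfolding op_spectrum_def
    proof (intro CollectI exI[of _ f] conjI ballI allI impI)
      show "x \<notin> V \<Longrightarrow> f x = 0" for x by (simp add: f_def)
      show "\<exists>x\<in>V. f x \<noteq> 0" using conn by (auto simp: f_def connected_graph_def)
      fix u assume u: "u \<in> V"
      have "(\<Sum>e\<in>{e\<in>arcs E. fst e = u}. of_real (w e) * f (snd e)) = (\<Sum>e\<in>{e\<in>arcs E. fst e = u}. of_real (w e)) * (- f u)"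
        unfolding sum_distrib_right
      proof (intro sum.cong refl)
        fix e assume e: "e \<in> {e\<in>arcs E. fst e = u}"
        hence "{fst e, snd e} \<in> E" by (auto simp: arcs_def)
        hence "c (fst e) \<noteq> c (snd e)" using c by blast
        moreover have "snd e \<in> V" using arc_in e by blast
        ultimately show "of_real (w e) * f (snd e) = of_real (w e) * - f u" using e u by (auto simp: f_def)
      qed
      also have "\<dots> = - f u" using wsum u unfolding of_real_sum[symmetric] by simp
      finally show "L_op E w f u = -2 * f u" unfolding L2 by simp
    qed
    thus ?thesis unfolding P_def preim_def phi2_def by simp
  qed
  have Pnbip: "bipartite V E" if m1: "-1 \<in> P"
  proof -
    have "-2 \<in> op_spectrum V (L_op E w)" using m1 unfolding P_def preim_def phi2_def by simp
    then obtain f where f: "\<exists>x\<in>V. f x \<noteq> 0" "\<forall>x\<in>V. L_op E w f x = -2 * f x"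
      unfolding op_spectrum_def by blast
    have "\<forall>u\<in>V. (\<Sum>e\<in>{e\<in>arcs E. fst e = u}. of_real (w e) * f (snd e)) = - f u"
      using f(2) unfolding L2 by (simp add: algebra_simps)
    thus ?thesis using neg1_bip[OF conn wpos wsum f(1)] by blast
  qed
  obtain m where m: "\<forall>u\<in>V. m u > 0" "\<forall>e\<in>arcs E. m (fst e) * w e = m (snd e) * w (rev_arc e)"
    using rv by blast
  have rel_bip: "bipartite V E"
    if h: "\<exists>u\<in>V. h u \<noteq> 0" "\<forall>e\<in>arcs E. h (fst e) * b e = -1 * h (snd e) * b (rev_arc e)" for h
  proof -
    define k where "k u = h u / of_real (m u)" for u
    show ?thesis
    proof (rule BIP[OF conn, of k])
      show "\<exists>u\<in>V. k u \<noteq> 0" using h(1) m(1) by (force simp: k_def)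
      show "\<forall>e\<in>arcs E. k (fst e) = - k (snd e)"
      proof
        fix e assume e: "e \<in> arcs E"
        have V: "fst e \<in> V" "snd e \<in> V" using arc_in e by auto
        have mp: "m (fst e) > 0" "m (snd e) > 0" using m(1) V by auto
        have we: "w e > 0" using wpos e by auto
        have r1: "h (fst e) * of_real (w e) = - h (snd e) * of_real (w (rev_arc e))"
          using h(2) e by (simp add: b_def)
        have r2: "of_real (m (fst e)) * of_real (w e) = (of_real (m (snd e) * w (rev_arc e)) :: complex)"
          using m(2) e by (metis of_real_mult)
        have "h (fst e) * of_real (w e) * of_real (m (snd e)) = - h (snd e) * (of_real (m (snd e) * w (rev_arc e)))"
          using r1 by (simp add: algebra_simps)
        also have "\<dots> = - h (snd e) * of_real (m (fst e)) * of_real (w e)" using r2 by (simp add: algebra_simps)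
        finally have X: "complex_of_real (w e) * (h (fst e) * of_real (m (snd e))) = complex_of_real (w e) * (- h (snd e) * of_real (m (fst e)))"
          by (simp add: algebra_simps)
        have "complex_of_real (w e) \<noteq> 0" using we by simp
        hence "h (fst e) * of_real (m (snd e)) = - h (snd e) * of_real (m (fst e))"
          using X mult_left_cancel by blast
        thus "k (fst e) = - k (snd e)" using mp unfolding k_def by (simp add: field_simps)
      qed
    qed
  qed
  have l1: "(-1::complex) * -1 = 1" by simp
  have sub: "l \<in> P \<or> (l = -1 \<and> card V < card E)" if l: "l \<in> op_spectrum (arcs E) (U2 E w)" for l
  proof -
    obtain \<psi> where eig: "\<forall>e\<in>arcs E. Ug (arcs E) one b \<psi> e = l * \<psi> e" and nz: "\<exists>e\<in>arcs E. \<psi> e \<noteq> 0"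
      using l unfolding op_spectrum_def U by blast
    from eig_U[OF eig nz] show ?thesis
    proof
      assume "l \<noteq> 0 \<and> phi1 l \<in> op_spectrum V (Mg (arcs E) one b)"
      thus ?thesis using Pdef by blast
    next
      assume B: "l * l = 1 \<and> (\<forall>e\<in>arcs E. \<psi> (rev_arc e) = - l * \<psi> e) \<and> (\<forall>u\<in>V. Fk (arcs E) b \<psi> u = 0)"
      have lpm: "l = 1 \<or> l = -1" using B by (metis mult_cancel_left1 square_eq_1_iff)
      show ?thesis
      proof (cases "l = 1")
        case True thus ?thesis using P1 by simp
      next
        case False
        hence lm: "l = -1" using lpm by simp
        show ?thesis
        proof (cases "l \<in> P")
          case True thus ?thesis by simp
        next
          case False
          have nb: "\<not> bipartite V E" using False Pbip lm by blast
          have "\<not> card E \<le> card V"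
          proof
            assume "card E \<le> card V"
            from birth_small[OF this, of l \<psi> b] B nz obtain h where
              "\<exists>u\<in>V. h u \<noteq> 0" "\<forall>e\<in>arcs E. h (fst e) * b e = l * h (snd e) * b (rev_arc e)" by blast
            thus False using rel_bip[of h] nb lm by blast
          qed
          thus ?thesis using lm by simp
        qed
      qed
    qed
  qed
  have sup: "P \<subseteq> op_spectrum (arcs E) (U2 E w)"
    unfolding U using eig_M_to_U Pdef by blast
  have m1U: "-1 \<in> op_spectrum (arcs E) (U2 E w)" if cE: "card V < card E"
  proof -
    obtain \<psi> where "\<forall>e\<in>arcs E. \<psi> (rev_arc e) = - (-1) * \<psi> e" "\<forall>u\<in>V. Fk (arcs E) b \<psi> u = 0"
        "\<exists>e\<in>arcs E. \<psi> e \<noteq> 0" "\<forall>e. e \<notin> arcs E \<longrightarrow> \<psi> e = 0"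
      using birth_exists[OF cE l1] by blast
    thus ?thesis unfolding U by (rule birth_to_U)
  qed
  show ?thesis
  proof (cases "is_tree V E")
    case True
    hence "bipartite V E" using tree_bip conn unfolding is_tree_def by blast
    hence "-1 \<in> P" by (rule Pbip)
    hence "op_spectrum (arcs E) (U2 E w) = P" using sub sup by blast
    thus ?thesis using True P_def by simp
  next
    case nt: False
    show ?thesis
    proof (cases "card E = card V \<and> \<not> bipartite V E")
      case True
      have "op_spectrum (arcs E) (U2 E w) = P" using sub sup True by fastforce
      thus ?thesis using nt True P1 P_def by auto
    next
      case False
      have "-1 \<in> op_spectrum (arcs E) (U2 E w)"
      proof (cases "bipartite V E")
        case True thus ?thesis using Pbip sup by blast
      next
        case nb: False
        have "\<not> card E < card V"
        proof
          assume "card E < card V"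
          from small_rel[OF this l1, of b] obtain h where
            "\<exists>u\<in>V. h u \<noteq> 0" "\<forall>e\<in>arcs E. h (fst e) * b e = -1 * h (snd e) * b (rev_arc e)" by blast
          thus False using rel_bip nb by blast
        qed
        hence "card V < card E" using False nb by simp
        thus ?thesis by (rule m1U)
      qed
      hence "op_spectrum (arcs E) (U2 E w) = P \<union> {1, -1}" using sub sup P1 by blast
      thus ?thesis unfolding if_not_P[OF nt] if_not_P[OF False] P_def .
    qed
  qed
qed

end

theorem proposition3:
  fixes V :: "'a set" and E :: "'a set set"
  assumes "simple_graph V E" and "connected_graph V E"
  shows
   "(\<forall>w1 :: 'a \<times> 'a \<Rightarrow> complex.
      (\<forall>u\<in>V. (\<Sum>e\<in>{e\<in>arcs E. fst e = u}. (cmod (w1 e))\<^sup>2) = 1) \<longrightarrow>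
      (let n = (\<lambda>s::complex. int (card E) - int (card V) + (if s \<in> op_spectrum V (T_op E w1) then 1 else 0))
       in op_spectrum (arcs E) (U1 E w1) =
            preim phi1 (op_spectrum V (T_op E w1))
            \<union> {x. x = 1 \<and> n 1 > 0} \<union> {x. x = -1 \<and> n (-1) > 0}))
    \<and>
    (\<forall>w2 :: 'a \<times> 'a \<Rightarrow> real.
      (\<forall>e\<in>arcs E. w2 e > 0) \<longrightarrow>
      (\<forall>u\<in>V. (\<Sum>e\<in>{e\<in>arcs E. fst e = u}. w2 e) = 1) \<longrightarrow>
      (\<exists>mV :: 'a \<Rightarrow> real. (\<forall>u\<in>V. mV u > 0) \<and>
          (\<forall>e\<in>arcs E. mV (fst e) * w2 e = mV (snd e) * w2 (rev_arc e))) \<longrightarrow>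
      op_spectrum (arcs E) (U2 E w2) =
        (if is_tree V E then preim phi2 (op_spectrum V (L_op E w2))
         else if card E = card V \<and> \<not> bipartite V E
           then preim phi2 (op_spectrum V (L_op E w2)) \<union> {1}
         else preim phi2 (op_spectrum V (L_op E w2)) \<union> {1, -1}))"
proof -
  interpret sgraph V E by unfold_locales (rule assms(1))
  show ?thesis
    using part_a[OF assms(2)] part_b[OF assms(2)] by (simp add: Let_def)
qed


end
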